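(* Let $A$ be a set of $n$ real numbers, let $\delta_0 \ge 0$, and let $\ell_1, \dots, \ell_K$ be lines in $\mathbb{R}^2$ of the form $y = \lambda_i x + \mu_i$ with $\lambda_i \neq 0$, each of which satisfies $|\ell_i \cap (A \times A)| \ge n^{1-\delta_0}$. Then at least $K^2 n^{-2\delta_0}/2$ of the ordered pairs $(i,j) \in \{1,\dots,K\}^2$ satisfy $$|Y(\ell_i) \cap Y(\ell_j)| \ge n^{1-2\delta_0}/2.$$
   Context: For a line $\ell$, $Y(\ell)$ denotes the projection of $\ell \cap (A \times A)$ onto the $y$-axis, i.e. $Y(\ell) = \{ y : (x,y) \in \ell \cap (A\times A) \text{ for some } x\}$. *)

theory Defs
  imports Complex_Main
begin

definition line :: "real \<Rightarrow> real \<Rightarrow> (real \<times> real) set" where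
  "line lam mu = {(x, y). y = lam * x + mu}"

definition Yproj :: "real set \<Rightarrow> (real \<times> real) set \<Rightarrow> real set" where
  "Yproj A l = {y. \<exists>x. (x, y) \<in> l \<inter> (A \<times> A)}"

end

theory Submission
  imports Defs
begin

lemma cs_sum:
  fixes c :: "'a \<Rightarrow> real"
  assumes "finite A"
  shows "(\<Sum>y\<in>A. c y)^2 \<le> real (card A) * (\<Sum>y\<in>A. (c y)^2)"
proof (cases "card A = 0")
  case True then show ?thesis using assms by simp
next
  case False
  define N where "N = real (card A)"
  have N: "N > 0" using False N_def by simp
  define s where "s = (\<Sum>y\<in>A. c y)"
  define m where "m = s / N"
  have "0 \<le> (\<Sum>y\<in>A. (c y - m)^2)" by (simp add: sum_nonneg)
  also have "\<dots> = (\<Sum>y\<in>A. (c y)^2) - 2 * m * s + N * m^2"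
    by (simp add: power2_diff sum.distrib sum_subtractf sum_distrib_left[symmetric] s_def N_def
        sum_distrib_right[symmetric] algebra_simps)
  also have "\<dots> = (\<Sum>y\<in>A. (c y)^2) - s^2 / N"
    using N by (simp add: m_def field_simps power2_eq_square)
  finally have "s^2 / N \<le> (\<Sum>y\<in>A. (c y)^2)" by simp
  then show ?thesis using N by (simp add: s_def N_def field_simps)
qed

lemma cardY:
  assumes "lam \<noteq> 0"
  shows "Yproj A (line lam mu) = snd ` (line lam mu \<inter> (A \<times> A))"
    and "card (Yproj A (line lam mu)) = card (line lam mu \<inter> (A \<times> A))"
    and "Yproj A (line lam mu) \<subseteq> A"
proof -
  show 1: "Yproj A (line lam mu) = snd ` (line lam mu \<inter> (A \<times> A))"
    unfolding Yproj_def by force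
  have "inj_on snd (line lam mu \<inter> (A \<times> A))"
    using assms by (auto simp: inj_on_def line_def)
  then show "card (Yproj A (line lam mu)) = card (line lam mu \<inter> (A \<times> A))"
    using 1 card_image by metis
  show "Yproj A (line lam mu) \<subseteq> A" unfolding Yproj_def by auto
qed

theorem lemma1:
  fixes A :: "real set" and n K :: nat and \<delta>0 :: real and lam mu :: "nat \<Rightarrow> real"
  assumes "finite A" and "card A = n" and "\<delta>0 \<ge> 0"
    and "\<forall>i\<in>{1..K}. lam i \<noteq> 0"
    and "\<forall>i\<in>{1..K}. real (card (line (lam i) (mu i) \<inter> (A \<times> A))) \<ge> real n powr (1 - \<delta>0)"
  shows "real (card {(i, j) \<in> {1..K} \<times> {1..K}.
            real (card (Yproj A (line (lam i) (mu i)) \<inter> Yproj A (line (lam j) (mu j))))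
              \<ge> real n powr (1 - 2 * \<delta>0) / 2})
         \<ge> (real K)\<^sup>2 * real n powr (- 2 * \<delta>0) / 2"
proof (cases "n = 0")
  case True then show ?thesis by simp
next
  case False
  hence npos: "real n > 0" by simp
  define I where "I = {1..K}"
  define Y where "Y i = Yproj A (line (lam i) (mu i))" for i
  define t where "t = real n powr (1 - 2 * \<delta>0) / 2"
  define f where "f p = real (card (Y (fst p) \<inter> Y (snd p)))" for p
  define P where "P = {(i, j) \<in> I \<times> I. real (card (Y i \<inter> Y j)) \<ge> t}"
  have fI: "finite I" by (simp add: I_def)
  have YA: "\<And>i. i \<in> I \<Longrightarrow> Y i \<subseteq> A" using cardY(3) assms(4) by (simp add: I_def Y_def)
  have Ycard: "\<And>i. i \<in> I \<Longrightarrow> real (card (Y i)) \<ge> real n powr (1 - \<delta>0)"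
    using cardY(2) assms(4,5) by (simp add: I_def Y_def)
  define c where "c y = (\<Sum>i\<in>I. if y \<in> Y i then 1 else 0 :: real)" for y
  have cardsum: "\<And>B. B \<subseteq> A \<Longrightarrow> real (card B) = (\<Sum>y\<in>A. if y \<in> B then 1 else 0)"
  proof -
    fix B assume "B \<subseteq> A"
    hence "B = A \<inter> B" by auto
    then show "real (card B) = (\<Sum>y\<in>A. if y \<in> B then 1 else (0::real))"
      using sum.inter_restrict[OF assms(1), of "\<lambda>_. 1::real" B] by simp
  qed
  have s1: "(\<Sum>i\<in>I. real (card (Y i))) = (\<Sum>y\<in>A. c y)"
  proof -
    have "(\<Sum>i\<in>I. real (card (Y i))) = (\<Sum>i\<in>I. \<Sum>y\<in>A. if y \<in> Y i then 1 else 0)"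
      using cardsum YA by simp
    also have "\<dots> = (\<Sum>y\<in>A. c y)" unfolding c_def by (rule sum.swap)
    finally show ?thesis .
  qed
  have s2: "(\<Sum>p\<in>I \<times> I. f p) = (\<Sum>y\<in>A. (c y)^2)"
  proof -
    have "(\<Sum>p\<in>I \<times> I. f p) = (\<Sum>i\<in>I. \<Sum>j\<in>I. real (card (Y i \<inter> Y j)))"
      unfolding f_def sum.cartesian_product by (simp add: case_prod_beta)
    also have "\<dots> = (\<Sum>i\<in>I. \<Sum>j\<in>I. \<Sum>y\<in>A. (if y \<in> Y i then 1 else 0) * (if y \<in> Y j then 1 else 0))"
    proof (intro sum.cong refl)
      fix i j assume "i \<in> I" "j \<in> I"
      hence "Y i \<inter> Y j \<subseteq> A" using YA by auto
      then show "real (card (Y i \<inter> Y j)) = (\<Sum>y\<in>A. (if y \<in> Y i then 1 else 0) * (if y \<in> Y j then 1 else (0::real)))"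
        using cardsum[of "Y i \<inter> Y j"] by (auto intro!: sum.cong)
    qed
    also have "\<dots> = (\<Sum>i\<in>I. \<Sum>y\<in>A. \<Sum>j\<in>I. (if y \<in> Y i then 1 else 0) * (if y \<in> Y j then 1 else (0::real)))"
      by (intro sum.cong refl sum.swap)
    also have "\<dots> = (\<Sum>y\<in>A. \<Sum>i\<in>I. \<Sum>j\<in>I. (if y \<in> Y i then 1 else 0) * (if y \<in> Y j then 1 else (0::real)))"
      by (rule sum.swap)
    also have "\<dots> = (\<Sum>y\<in>A. (c y)^2)"
      unfolding c_def power2_eq_square sum_product by simp
    finally show ?thesis .
  qed
  have lowsum: "(\<Sum>i\<in>I. real (card (Y i))) \<ge> real K * real n powr (1 - \<delta>0)"
  proof -
    have "(\<Sum>i\<in>I. real (card (Y i))) \<ge> (\<Sum>i\<in>I. real n powr (1 - \<delta>0))"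
      by (intro sum_mono Ycard)
    then show ?thesis by (simp add: I_def)
  qed
  have "(real K * real n powr (1 - \<delta>0))^2 \<le> (\<Sum>y\<in>A. c y)^2"
    using lowsum s1 by (intro power_mono) auto
  also have "\<dots> \<le> real n * (\<Sum>y\<in>A. (c y)^2)" using cs_sum[OF assms(1)] assms(2) by simp
  finally have A1: "(real K * real n powr (1 - \<delta>0))^2 \<le> real n * (\<Sum>p\<in>I \<times> I. f p)"
    using s2 by simp
  have "(real n powr (1 - \<delta>0))^2 = real n * (2 * t)"
  proof -
    have "(real n powr (1 - \<delta>0))^2 = real n powr ((1 - \<delta>0) + (1 - \<delta>0))"
      unfolding power2_eq_square powr_add[symmetric] by simp
    also have "\<dots> = real n powr (1 + (1 - 2*\<delta>0))" by (simp add: algebra_simps)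
    also have "\<dots> = real n * real n powr (1 - 2*\<delta>0)" using npos powr_add[of "real n" 1 "1 - 2*\<delta>0"] by simp
    finally show ?thesis by (simp add: t_def)
  qed
  hence "real n * ((real K)^2 * (2 * t)) \<le> real n * (\<Sum>p\<in>I \<times> I. f p)"
    using A1 by (simp add: power_mult_distrib algebra_simps)
  hence B: "(real K)^2 * (2 * t) \<le> (\<Sum>p\<in>I \<times> I. f p)" using npos by simp
  have fin: "finite (I \<times> I)" using fI by simp
  have PI: "P \<subseteq> I \<times> I" by (auto simp: P_def)
  have "(\<Sum>p\<in>I \<times> I. f p) = (\<Sum>p\<in>P. f p) + (\<Sum>p\<in>(I \<times> I) - P. f p)"
    using sum.subset_diff[OF PI fin] by (simp add: add.commute)
  also have "(\<Sum>p\<in>P. f p) \<le> (\<Sum>p\<in>P. real n)"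
  proof (rule sum_mono)
    fix p assume "p \<in> P"
    hence "fst p \<in> I" using PI by (auto simp: mem_Times_iff)
    hence "Y (fst p) \<inter> Y (snd p) \<subseteq> A" using YA by blast
    hence "card (Y (fst p) \<inter> Y (snd p)) \<le> n" using assms(1,2) card_mono by metis
    then show "f p \<le> real n" by (simp add: f_def)
  qed
  also have "(\<Sum>p\<in>(I \<times> I) - P. f p) \<le> (\<Sum>p\<in>(I \<times> I) - P. t)"
    by (rule sum_mono) (auto simp: P_def f_def)
  also have "(\<Sum>p\<in>(I \<times> I) - P. t) = real (card (I \<times> I - P)) * t" by simp
  also have "\<dots> \<le> real (card (I \<times> I)) * t"
    using fin PI by (intro mult_right_mono) (auto intro: card_mono simp: t_def)
  finally have D: "(\<Sum>p\<in>I \<times> I. f p) \<le> (\<Sum>p\<in>P. real n) + real (card (I \<times> I)) * t" by simp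
  have "real (card (I \<times> I)) = (real K)^2" by (simp add: I_def card_cartesian_product power2_eq_square)
  hence "(real K)^2 * (2 * t) \<le> real (card P) * real n + (real K)^2 * t"
    using B D by (simp add: mult.commute)
  hence C: "(real K)^2 * t \<le> real (card P) * real n" by (simp add: algebra_simps)
  have "t = real n * (real n powr (- 2 * \<delta>0)) / 2"
    using npos powr_add[of "real n" 1 "- 2 * \<delta>0"] by (simp add: t_def)
  hence "real n * ((real K)^2 * real n powr (- 2 * \<delta>0) / 2) \<le> real n * real (card P)"
  proof -
    assume tt: "t = real n * (real n powr (- 2 * \<delta>0)) / 2"
    have "real n * ((real K)^2 * real n powr (- 2 * \<delta>0) / 2) = (real K)^2 * t"
      unfolding tt by (simp add: algebra_simps)
    then show ?thesis using C by (metis mult.commute)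
  qed
  hence "(real K)^2 * real n powr (- 2 * \<delta>0) / 2 \<le> real (card P)" using npos by simp
  then show ?thesis by (simp add: P_def I_def Y_def t_def)
qed

end
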